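(* Let $d\ge 1$ be an integer and let $\mathcal{P}$ be the set of all (nonempty) integer partitions. As formal power series, $$\sum_{\lambda\in\mathcal{P}}t^{\mathrm{mod}_d(\lambda)}x^{\ell(\lambda)}y^{\lambda_1}=\frac{txy(1-x)^d+\frac{xy}{x+y-1}\left(y^{d+1}-y(1-x)^d\right)}{(1-tx)(1-x)^d-y^{d+1}}.$$ In particular, $$\sum_{\lambda\in\mathcal{P}}t^{\mathrm{mod}'_d(\lambda)}x^{\Gamma(\lambda)}=\frac{x\left(tx^{d+1}+(1-tx)^d(x-1)\right)}{(1-x-tx)\left((1-tx)^d(x-1)+x^{d+1}\right)}.$$
   Context: A partition is a finite nonempty weakly decreasing sequence $\lambda=(\lambda_1,\ldots,\lambda_k)$ of positive integers; $\ell(\lambda)=k$ and $\lambda_1$ is the largest part. The perimeter is $\Gamma(\lambda)=\lambda_1+\ell(\lambda)-1$. $\mathrm{mod}_d(\lambda)=|\{i:\lambda_i\equiv 1\pmod{d+1}\}|$ and $\mathrm{mod}'_d(\lambda)=\ell(\lambda)-\mathrm{mod}_d(\lambda)$ (the number of parts not congruent to $1$ modulo $d+1$). *)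

theory Defs
  imports "HOL-Computational_Algebra.Formal_Power_Series"
begin

definition partition :: "nat list \<Rightarrow> bool" where
  "partition l \<longleftrightarrow> l \<noteq> [] \<and> sorted_wrt (\<ge>) l \<and> (\<forall>p\<in>set l. 0 < p)"

definition largest :: "nat list \<Rightarrow> nat" where "largest l = hd l"

definition perim :: "nat list \<Rightarrow> nat" where "perim l = largest l + length l - 1"

definition modd :: "nat \<Rightarrow> nat list \<Rightarrow> nat" where
  "modd d l = length (filter (\<lambda>p. p mod (d+1) = 1 mod (d+1)) l)"
definition modd' :: "nat \<Rightarrow> nat list \<Rightarrow> nat" where
  "modd' d l = length l - modd d l"

text \<open>Trivariate power series in t,x,y: int fps fps fps, outer variable y,
  middle x, inner t.  Coefficient of y^k x^j t^i is F $ k $ j $ i.\<close>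
definition Tv :: "int fps fps fps" where "Tv = fps_const (fps_const fps_X)"
definition Xv :: "int fps fps fps" where "Xv = fps_const fps_X"
definition Yv :: "int fps fps fps" where "Yv = fps_X"

definition GF3 :: "nat \<Rightarrow> int fps fps fps" where
  "GF3 d = Abs_fps (\<lambda>k. Abs_fps (\<lambda>j. Abs_fps (\<lambda>i.
     int (card {l. partition l \<and> largest l = k \<and> length l = j \<and> modd d l = i}))))"

text \<open>Bivariate power series in t,x: int fps fps, outer variable x, inner t.\<close>
definition T2 :: "int fps fps" where "T2 = fps_const fps_X"
definition X2 :: "int fps fps" where "X2 = fps_X"

definition GF2 :: "nat \<Rightarrow> int fps fps" where
  "GF2 d = Abs_fps (\<lambda>n. Abs_fps (\<lambda>i.
     int (card {l. partition l \<and> perim l = n \<and> modd' d l = i})))"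

end

theory Submission
  imports Defs
begin

unbundle fps_syntax




definition ev :: "'a::comm_ring_1 fps fps \<Rightarrow> 'a fps" where
  "ev G = Abs_fps (\<lambda>n. \<Sum>k\<le>n. G $ k $ (n-k))"

lemma ev_nth: "ev G $ n = (\<Sum>k\<le>n. G $ k $ (n-k))"
  by (simp add: ev_def)

lemma ev_add: "ev (G + H) = ev G + ev H"
  by (rule fps_ext) (simp add: ev_nth sum.distrib)

lemma ev_diff: "ev (G - H) = ev G - ev H"
  by (rule fps_ext) (simp add: ev_nth sum_subtractf)

lemma ev_const: "ev (fps_const c) = c"
  by (rule fps_ext) (simp add: ev_nth atMost_atLeast0 sum.atLeast_Suc_atMost)

lemma ev_1: "ev 1 = 1"
  using ev_const[of 1] by simp


lemma ev_X: "ev (fps_X :: 'a::comm_ring_1 fps fps) = fps_X"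
proof (rule fps_ext)
  fix n
  show "ev (fps_X :: 'a fps fps) $ n = fps_X $ n"
  proof (cases n)
    case 0 then show ?thesis by (simp add: ev_nth)
  next
    case (Suc m)
    have "ev (fps_X :: 'a fps fps) $ n = (\<Sum>k\<le>n. (if k = 1 then (1::'a fps) $ (n-1) else 0))"
      unfolding ev_nth by (rule sum.cong) auto
    also have "\<dots> = (1::'a fps) $ (n-1)" using Suc by (simp add: sum.delta)
    finally show ?thesis using Suc by (cases m) auto
  qed
qed

lemma ev_mult: "ev (G * H) = ev G * ev H"
proof (rule fps_ext)
  fix n
  define Q where "Q = {(i,j,b,e). i+j+b+e = (n::nat)}"
  define g where "g = (\<lambda>(i,j,b,e). G$i$j * H$b$e)"
  have L: "ev (G*H) $ n = sum g Q"
  proof -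
    have "ev (G*H) $ n = (\<Sum>k\<le>n. \<Sum>i\<in>{0..k}. \<Sum>j\<in>{0..n-k}. G$i$j * H$(k-i)$(n-k-j))"
      by (simp add: ev_nth fps_mult_nth fps_sum_nth)
    also have "\<dots> = (\<Sum>(k,i,j)\<in>(SIGMA k:{..n}. SIGMA i:{0..k}. {0..n-k}). G$i$j * H$(k-i)$(n-k-j))"
      by (simp add: sum.Sigma)
    also have "\<dots> = sum g Q"
      by (rule sum.reindex_bij_witness[where i="\<lambda>(i,j,b,e). (i+b, i, j)" and j="\<lambda>(k,i,j). (i,j,k-i,n-k-j)"])
         (auto simp: Q_def g_def)
    finally show ?thesis .
  qed
  have R: "(ev G * ev H) $ n = sum g Q"
  proof -
    have "(ev G * ev H) $ n = (\<Sum>m\<in>{0..n}. \<Sum>a\<le>m. \<Sum>b\<le>n-m. G$a$(m-a) * H$b$(n-m-b))"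
      by (simp add: ev_nth fps_mult_nth sum_product)
    also have "\<dots> = (\<Sum>(m,a,b)\<in>(SIGMA m:{0..n}. SIGMA a:{..m}. {..n-m}). G$a$(m-a) * H$b$(n-m-b))"
      by (simp add: sum.Sigma)
    also have "\<dots> = sum g Q"
      by (rule sum.reindex_bij_witness[where i="\<lambda>(i,j,b,e). (i+j, i, b)" and j="\<lambda>(m,a,b). (a,m-a,b,n-m-b)"])
         (auto simp: Q_def g_def)
    finally show ?thesis .
  qed
  show "ev (G * H) $ n = (ev G * ev H) $ n" using L R by simp
qed

lemma ev_power: "ev (G ^ k) = ev G ^ k"
  by (induction k) (simp_all add: ev_1 ev_mult)





definition S :: "(nat \<Rightarrow> bool) \<Rightarrow> nat \<Rightarrow> nat \<Rightarrow> nat \<Rightarrow> nat list set" where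
  "S M k j i = {l. sorted_wrt (\<ge>) l \<and> (\<forall>p\<in>set l. 0 < p \<and> p \<le> k) \<and> length l = j \<and> length (filter M l) = i}"

definition PP :: "(nat \<Rightarrow> bool) \<Rightarrow> nat \<Rightarrow> nat \<Rightarrow> nat \<Rightarrow> nat list set" where
  "PP M k j i = {l. partition l \<and> largest l = k \<and> length l = j \<and> length (filter M l) = i}"

lemma S_finite: "finite (S M k j i)"
proof -
  have "S M k j i \<subseteq> {l. set l \<subseteq> {..k} \<and> length l = j}"
    unfolding S_def by auto
  moreover have "finite {l. set l \<subseteq> {..k} \<and> length l = j}"
    by (rule finite_lists_length_eq) simp
  ultimately show ?thesis by (rule finite_subset)
qed

lemma S_zero: "S M 0 j i = (if j = 0 \<and> i = 0 then {[]} else {})"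
proof -
  have "l \<in> S M 0 j i \<longleftrightarrow> l = [] \<and> j = 0 \<and> i = 0" for l
    unfolding S_def by (cases l) auto
  then show ?thesis by auto
qed

lemma S_split:
  assumes "k \<ge> 1"
  shows "S M k j i = S M (k-1) j i \<union> PP M k j i" and "S M (k-1) j i \<inter> PP M k j i = {}"
proof -
  show "S M k j i = S M (k-1) j i \<union> PP M k j i"
  proof (intro equalityI subsetI)
    fix l assume l: "l \<in> S M k j i"
    show "l \<in> S M (k-1) j i \<union> PP M k j i"
    proof (cases l)
      case Nil then show ?thesis using l by (auto simp: S_def)
    next
      case (Cons x xs)
      show ?thesis
      proof (cases "x = k")
        case True then show ?thesis using l Cons
          by (auto simp: S_def PP_def partition_def largest_def)
      next
        case False
        with l Cons have "x \<le> k - 1" by (auto simp: S_def)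
        with l Cons have "\<forall>p\<in>set l. p \<le> k - 1" by (auto simp: S_def)
        then show ?thesis using l by (auto simp: S_def)
      qed
    qed
  next
    fix l assume "l \<in> S M (k-1) j i \<union> PP M k j i"
    then show "l \<in> S M k j i"
    proof
      assume "l \<in> S M (k-1) j i" then show ?thesis by (auto simp: S_def)
    next
      assume l: "l \<in> PP M k j i"
      then obtain xs where "l = k # xs" unfolding PP_def partition_def largest_def
        by (cases l) auto
      then show ?thesis using l by (auto simp: S_def PP_def partition_def)
    qed
  qed
  show "S M (k-1) j i \<inter> PP M k j i = {}"
  proof (rule ccontr)
    assume "S M (k-1) j i \<inter> PP M k j i \<noteq> {}"
    then obtain l where l1: "l \<in> S M (k-1) j i" and l2: "l \<in> PP M k j i" by blast
    from l2 obtain xs where "l = k # xs" unfolding PP_def partition_def largest_def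
      by (cases l) auto
    with l1 assms show False by (auto simp: S_def)
  qed
qed

lemma PP_finite: "k \<ge> 1 \<Longrightarrow> finite (PP M k j i)"
  using S_split(1)[of k M j i] S_finite[of M k j i] by (metis finite_Un)

lemma card_S_split: "k \<ge> 1 \<Longrightarrow> card (S M k j i) = card (S M (k-1) j i) + card (PP M k j i)"
  using S_split[of k M j i] S_finite[of M "k-1" j i] PP_finite[of k M j i]
  by (simp add: card_Un_disjoint)

lemma PP_zero: "PP M 0 j i = {}"
  by (auto simp: PP_def partition_def largest_def neq_Nil_conv)

lemma card_PP:
  assumes "k \<ge> 1"
  shows "card (PP M k j i) = (if j = 0 then 0 else if M k then (if i = 0 then 0 else card (S M k (j-1) (i-1)))
            else card (S M k (j-1) i))"
proof (cases j)
  case 0 then show ?thesis by (auto simp: PP_def partition_def)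
next
  case (Suc j')
  define i' where "i' = (if M k then i - 1 else i)"
  show ?thesis
  proof (cases "M k \<and> i = 0")
    case True
    have "PP M k j i = {}"
      using True by (auto simp: PP_def partition_def largest_def neq_Nil_conv)
    then show ?thesis using True Suc by simp
  next
    case False
    have "PP M k j i = (\<lambda>l. k # l) ` S M k j' i'"
    proof (intro equalityI subsetI)
      fix l assume l: "l \<in> PP M k j i"
      then obtain xs where xs: "l = k # xs" unfolding PP_def partition_def largest_def
        by (cases l) auto
      have "xs \<in> S M k j' i'" using l xs Suc False unfolding PP_def partition_def S_def i'_def
        by (auto split: if_splits)
      then show "l \<in> (\<lambda>l. k # l) ` S M k j' i'" using xs by blast
    next
      fix l assume "l \<in> (\<lambda>l. k # l) ` S M k j' i'"
      then obtain xs where xs: "l = k # xs" "xs \<in> S M k j' i'" by blast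
      then show "l \<in> PP M k j i" using Suc False assms unfolding PP_def partition_def S_def i'_def largest_def
        by (auto split: if_splits)
    qed
    then have "card (PP M k j i) = card (S M k j' i')"
      by (simp add: card_image)
    then show ?thesis using Suc False by (auto simp: i'_def)
  qed
qed





definition cc :: "(nat \<Rightarrow> bool) \<Rightarrow> nat \<Rightarrow> int fps fps" where
  "cc M k = Abs_fps (\<lambda>j. Abs_fps (\<lambda>i. int (card (S M k j i))))"

definition W :: "(nat \<Rightarrow> bool) \<Rightarrow> nat \<Rightarrow> int fps fps" where
  "W M k = (if M k then fps_const fps_X else 1)"

definition F3 :: "(nat \<Rightarrow> bool) \<Rightarrow> int fps fps fps" where
  "F3 M = Abs_fps (\<lambda>k. Abs_fps (\<lambda>j. Abs_fps (\<lambda>i. int (card (PP M k j i)))))"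

definition GG :: "(nat \<Rightarrow> bool) \<Rightarrow> int fps fps fps" where
  "GG M = Abs_fps (cc M)"

lemma cc_0: "cc M 0 = 1"
proof (rule fps_ext)
  fix j show "cc M 0 $ j = 1 $ j"
  proof (rule fps_ext)
    fix i show "cc M 0 $ j $ i = 1 $ j $ i"
      by (simp add: cc_def S_zero)
  qed
qed

lemma cc_rec:
  assumes "k \<ge> 1"
  shows "cc M k = cc M (k-1) + W M k * (fps_X * cc M k)"
proof (rule fps_ext)
  fix j show "cc M k $ j = (cc M (k-1) + W M k * (fps_X * cc M k)) $ j"
  proof (rule fps_ext)
    fix i show "cc M k $ j $ i = (cc M (k-1) + W M k * (fps_X * cc M k)) $ j $ i"
      using card_S_split[OF assms, where M=M and j=j and i=i] card_PP[OF assms, where M=M and j=j and i=i]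
      by (cases "M k") (auto simp: cc_def W_def)
  qed
qed

lemma cc_rec': "k \<ge> 1 \<Longrightarrow> cc M k * (1 - W M k * fps_X) = cc M (k-1)"
  using cc_rec[of k M] by (simp add: algebra_simps)

lemma F3_eq: "F3 M = (1 - fps_X) * GG M - 1"
proof (rule fps_ext)
  fix k show "F3 M $ k = ((1 - fps_X) * GG M - 1) $ k"
  proof (cases "k = 0")
    case True
    then show ?thesis
      by (simp add: F3_def GG_def PP_zero cc_0 fps_eq_iff)
  next
    case False
    have "F3 M $ k = cc M k - cc M (k-1)"
    proof (rule fps_ext)
      fix j show "F3 M $ k $ j = (cc M k - cc M (k-1)) $ j"
      proof (rule fps_ext)
        fix i show "F3 M $ k $ j $ i = (cc M k - cc M (k-1)) $ j $ i"
          using card_S_split[where k=k and M=M and j=j and i=i] False by (simp add: F3_def cc_def)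
      qed
    qed
    then show ?thesis using False by (simp add: GG_def algebra_simps)
  qed
qed





lemma cc_prod: "cc M k = cc M (k + r) * (\<Prod>m\<in>{k+1..k+r}. 1 - W M m * fps_X)"
proof (induction r)
  case 0 then show ?case by simp
next
  case (Suc r)
  define f where "f = (\<lambda>m. 1 - W M m * fps_X)"
  have c: "cc M (k + r) = cc M (k + Suc r) * f (k + Suc r)"
    using cc_rec'[of "k + Suc r" M] by (simp add: f_def)
  have p: "prod f {k+1..k+Suc r} = prod f {k+1..k+r} * f (k + Suc r)"
    by simp
  have "cc M k = cc M (k + r) * prod f {k+1..k+r}" using Suc by (simp add: f_def)
  also have "\<dots> = cc M (k + Suc r) * prod f {k+1..k+Suc r}"
    unfolding c p by (simp only: mult_ac)
  finally show ?case by (simp only: f_def)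
qed

lemma f_nz: "(1 - W M m * fps_X :: int fps fps) \<noteq> 0"
proof
  assume "(1 - W M m * fps_X :: int fps fps) = 0"
  then have "(1 - W M m * fps_X :: int fps fps) $ 0 = 0" by simp
  then show False by simp
qed

lemma prod_shift:
  assumes per: "\<And>k. M (k + (d+1)) = M k"
  shows "(\<Prod>m\<in>{k+1..k+d+1}. 1 - W M m * fps_X) = (\<Prod>m\<in>{1..d+1}. 1 - W M m * fps_X)"
proof (induction k)
  case 0 then show ?case by simp
next
  case (Suc k)
  define f where "f = (\<lambda>m. 1 - W M m * fps_X)"
  have e1: "prod f {k+1..k+d+2} = f (k+1) * prod f {k+2..k+d+2}"
    using prod.atLeast_Suc_atMost[of "k+1" "k+d+2" f] by simp
  have e2: "prod f {k+1..k+d+2} = prod f {k+1..k+d+1} * f (k+d+2)"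
    using prod.cl_ivl_Suc[of f "k+1" "k+d+1"] by simp
  have eq: "f (k+d+2) = f (k+1)" using per[of "k+1"] by (simp add: f_def W_def add.commute add.left_commute)
  have "f (k+1) * prod f {k+2..k+d+2} = f (k+1) * prod f {k+1..k+d+1}"
    by (metis e1 e2 eq mult.commute)
  then have "prod f {k+2..k+d+2} = prod f {k+1..k+d+1}"
    using f_nz[of M "k+1"] unfolding f_def by (rule mult_left_cancel[THEN iffD1, rotated])
  moreover have "{Suc k+1..Suc k+d+1} = {k+2..k+d+2}" by auto
  ultimately show ?case using Suc by (simp only: f_def)
qed

lemma prod_base:
  assumes hu: "W M 1 = u" and hv: "\<forall>m\<in>{2..d+1}. W M m = v"
  shows "(\<Prod>m\<in>{1..d+1}. 1 - W M m * fps_X) = (1 - u * fps_X) * (1 - v * fps_X) ^ d"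
proof -
  have "(\<Prod>m\<in>{1..d+1}. 1 - W M m * fps_X) = (1 - W M 1 * fps_X) * (\<Prod>m\<in>{2..d+1}. 1 - W M m * fps_X)"
    using prod.atLeast_Suc_atMost[of 1 "d+1" "\<lambda>m. 1 - W M m * fps_X"] by (simp add: numeral_2_eq_2)
  also have "(\<Prod>m\<in>{2..d+1}. 1 - W M m * fps_X) = (\<Prod>m\<in>{2..d+1}. 1 - v * fps_X)"
    using hv by (intro prod.cong) auto
  also have "\<dots> = (1 - v * fps_X) ^ d" by simp
  finally show ?thesis using hu by simp
qed





lemma main_general:
  assumes d1: "d \<ge> 1"
    and per: "\<And>k. M (k + (d+1)) = M k"
    and hu: "W M 1 = u" and hv: "\<forall>m\<in>{2..d+1}. W M m = v"
  defines "a \<equiv> 1 - v * fps_X" and "b \<equiv> 1 - u * fps_X"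
  shows "F3 M * ((fps_const (b * a ^ d) - fps_X ^ (d+1)) * (fps_X - fps_const a))
     = (1 - fps_X) * (fps_const (b * a ^ d) * (fps_X - fps_const a) + fps_const a * fps_X ^ (d+1)
          - fps_const (a * a ^ d) * fps_X)
       - (fps_const (b * a ^ d) - fps_X ^ (d+1)) * (fps_X - fps_const a)"
proof -
  define Q where "Q = b * a ^ d"
  have period: "cc M (k + (d+1)) * Q = cc M k" for k
  proof -
    have "cc M k = cc M (k + (d+1)) * (\<Prod>m\<in>{k+1..k+(d+1)}. 1 - W M m * fps_X)"
      by (rule cc_prod)
    also have "(\<Prod>m\<in>{k+1..k+(d+1)}. 1 - W M m * fps_X) = Q"
      using prod_shift[of M d k, OF per] prod_base[OF hu hv] by (simp add: Q_def a_def b_def)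
    finally show ?thesis by simp
  qed
  have small: "cc M k * b * a ^ (k-1) = 1" if "1 \<le> k" "k \<le> d+1" for k
    using that
  proof (induction k)
    case 0 then show ?case by simp
  next
    case (Suc k)
    show ?case
    proof (cases "k = 0")
      case True
      then show ?thesis using cc_rec'[of 1 M] hu cc_0[of M] by (simp add: b_def)
    next
      case False
      have wk: "W M (Suc k) = v" using hv Suc.prems False by auto
      have "cc M (Suc k) * a = cc M k" using cc_rec'[of "Suc k" M] wk by (simp add: a_def)
      moreover have "cc M k * b * a ^ (k-1) = 1" using Suc False by simp
      ultimately have "(cc M (Suc k) * a) * b * a ^ (k-1) = 1" by simp
      moreover have "a ^ (Suc k - 1) = a * a ^ (k - 1)" using False
        by (metis Suc_pred' diff_Suc_1 neq0_conv power_Suc)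
      ultimately show ?thesis by (simp add: mult_ac)
    qed
  qed
  have smallQ: "cc M k * Q = a ^ (d+1-k)" if "1 \<le> k" "k \<le> d+1" for k
  proof -
    have "a ^ d = a ^ (k-1) * a ^ (d+1-k)" using that by (simp flip: power_add)
    then have "cc M k * Q = cc M k * (b * (a ^ (k-1) * a ^ (d+1-k)))" by (simp only: Q_def)
    also have "\<dots> = (cc M k * b * a ^ (k-1)) * a ^ (d+1-k)" by (simp only: mult_ac)
    also have "\<dots> = a ^ (d+1-k)" using small[OF that] by simp
    finally show ?thesis .
  qed
  define R :: "int fps fps fps" where "R = Abs_fps (\<lambda>k. if 1 \<le> k \<and> k \<le> d then a ^ (d+1-k) else 0)"
  have GQ: "GG M * (fps_const Q - fps_X ^ (d+1)) = fps_const Q + R"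
  proof (rule fps_ext)
    fix k
    have "(GG M * (fps_const Q - fps_X ^ (d+1))) $ k = cc M k * Q - (if k < d+1 then 0 else cc M (k - (d+1)))"
      by (auto simp: algebra_simps fps_X_power_mult_right_nth GG_def)
    also have "\<dots> = (fps_const Q + R) $ k"
    proof (cases "k = 0")
      case True then show ?thesis by (simp add: R_def cc_0)
    next
      case False
      show ?thesis
      proof (cases "k \<le> d")
        case True then show ?thesis using False smallQ[of k] by (simp add: R_def)
      next
        case False2: False
        then have "k = (k - (d+1)) + (d+1)" by simp
        then have "cc M k * Q = cc M (k - (d+1))" using period[of "k - (d+1)"] by simp
        then show ?thesis using False False2 by (simp add: R_def)
      qed
    qed
    finally show "(GG M * (fps_const Q - fps_X ^ (d+1))) $ k = (fps_const Q + R) $ k" .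
  qed
  have RX: "R * (fps_X - fps_const a) = fps_const a * fps_X ^ (d+1) - fps_const (a * a ^ d) * fps_X"
  proof (rule fps_ext)
    fix k
    have "(R * (fps_X - fps_const a)) $ k = (if k = 0 then 0 else R $ (k-1)) - R $ k * a"
      by (simp add: algebra_simps)
    also have "\<dots> = (fps_const a * fps_X ^ (d+1) - fps_const (a * a ^ d) * fps_X) $ k"
    proof -
      consider "k = 0" | "k = 1" | "2 \<le> k \<and> k \<le> d" | "k = d+1" | "k > d+1" using d1 by linarith
      then show ?thesis
      proof cases
        case 1 then show ?thesis by (simp add: R_def)
      next
        case 2 then show ?thesis using d1 by (simp add: R_def fps_X_power_mult_right_nth mult.commute)
      next
        case 3
        then have "a ^ (d+1-(k-1)) = a ^ (d+1-k) * a" by (simp add: Suc_diff_le flip: power_Suc2)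
        then show ?thesis using 3 by (auto simp: R_def fps_X_power_mult_right_nth)
      next
        case 4 then show ?thesis using d1 by (simp add: R_def fps_X_power_mult_right_nth)
      next
        case 5 then show ?thesis by (auto simp: R_def fps_X_power_mult_right_nth)
      qed
    qed
    finally show "(R * (fps_X - fps_const a)) $ k = (fps_const a * fps_X ^ (d+1) - fps_const (a * a ^ d) * fps_X) $ k" .
  qed
  have "F3 M * ((fps_const Q - fps_X ^ (d+1)) * (fps_X - fps_const a))
      = (1 - fps_X) * ((GG M * (fps_const Q - fps_X ^ (d+1))) * (fps_X - fps_const a))
        - (fps_const Q - fps_X ^ (d+1)) * (fps_X - fps_const a)"
    unfolding F3_eq by (simp add: algebra_simps del: fps_const_mult)
  also have "\<dots> = (1 - fps_X) * (fps_const Q * (fps_X - fps_const a) + R * (fps_X - fps_const a))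
        - (fps_const Q - fps_X ^ (d+1)) * (fps_X - fps_const a)"
    unfolding GQ by (simp add: algebra_simps del: fps_const_mult)
  finally show ?thesis unfolding RX Q_def by (simp only: algebra_simps)
qed





lemma PP_finite': "finite (PP M k j i)"
  by (cases "k = 0") (simp_all add: PP_zero PP_finite)

lemma ev_F3:
  fixes d :: nat
  defines "M2 \<equiv> (\<lambda>p::nat. \<not> (p mod (d+1) = 1 mod (d+1)))"
  shows "ev (F3 M2) = fps_X * GF2 d"
proof (rule fps_ext)
  fix n
  show "ev (F3 M2) $ n = (fps_X * GF2 d) $ n"
  proof (rule fps_ext)
    fix i
    have L: "ev (F3 M2) $ n $ i = (\<Sum>k\<le>n. int (card (PP M2 k (n-k) i)))"
      by (simp add: ev_nth fps_sum_nth F3_def)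
    show "ev (F3 M2) $ n $ i = (fps_X * GF2 d) $ n $ i"
    proof (cases "n = 0")
      case True
      then show ?thesis using L by (simp add: PP_zero)
    next
      case False
      have set_eq: "{l. partition l \<and> perim l = n-1 \<and> modd' d l = i} = (\<Union>k\<in>{..n}. PP M2 k (n-k) i)"
      proof (intro equalityI subsetI)
        fix l assume "l \<in> {l. partition l \<and> perim l = n-1 \<and> modd' d l = i}"
        then have l: "partition l" "perim l = n-1" "modd' d l = i" by auto
        have ne: "l \<noteq> []" and hd: "hd l > 0" using l(1) unfolding partition_def by auto
        have len: "length l \<ge> 1" using ne by (cases l) auto
        have f: "length (filter M2 l) = i"
          using l(3) sum_length_filter_compl[of "\<lambda>p. p mod (d+1) = 1 mod (d+1)" l]
          unfolding modd'_def modd_def M2_def by simp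
        have "largest l + length l = n" using l(2) hd len False unfolding perim_def largest_def by simp
        then show "l \<in> (\<Union>k\<in>{..n}. PP M2 k (n-k) i)"
          using l(1) f by (auto simp: PP_def intro!: bexI[of _ "largest l"])
      next
        fix l assume "l \<in> (\<Union>k\<in>{..n}. PP M2 k (n-k) i)"
        then obtain k where k: "k \<le> n" "l \<in> PP M2 k (n-k) i" by auto
        then have l: "partition l" "largest l = k" "length l = n - k" "length (filter M2 l) = i"
          unfolding PP_def by auto
        have ne: "l \<noteq> []" and hd: "hd l > 0" using l(1) unfolding partition_def by auto
        have len: "length l \<ge> 1" using ne by (cases l) auto
        have m: "modd' d l = i"
          using l(4) sum_length_filter_compl[of "\<lambda>p. p mod (d+1) = 1 mod (d+1)" l]
          unfolding modd'_def modd_def M2_def by simp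
        have "perim l = n - 1" using l k(1) hd len unfolding perim_def largest_def by simp
        then show "l \<in> {l. partition l \<and> perim l = n-1 \<and> modd' d l = i}" using l(1) m by simp
      qed
      have "card (\<Union>k\<in>{..n}. PP M2 k (n-k) i) = (\<Sum>k\<le>n. card (PP M2 k (n-k) i))"
        by (rule card_UN_disjoint) (auto simp: PP_finite', auto simp: PP_def)
      then have "(fps_X * GF2 d) $ n $ i = (\<Sum>k\<le>n. int (card (PP M2 k (n-k) i)))"
        using False set_eq by (simp add: GF2_def)
      then show ?thesis using L by simp
    qed
  qed
qed





lemma fc_sub1: "fps_const (1 - c) = 1 - fps_const (c::'a::comm_ring_1)"
  by (rule fps_ext) simp

lemma ring1:
  fixes T X Y Ad Yd :: "'a::comm_ring_1"
  shows "(1 - Y) * ((1 - T*X)*Ad*(Y - (1-X)) + (1-X)*Yd - ((1-X)*Ad)*Y) - ((1-T*X)*Ad - Yd)*(Y - (1-X))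
     = T*X*Y*Ad*(X+Y-1) + X*Y*(Yd - Y*Ad)"
  by (simp add: algebra_simps)

lemma ring2a:
  fixes T X G Ad Xd :: "'a::comm_ring_1"
  shows "X * (G * ((1 - X - T * X) * (Ad * (X - 1) + Xd))) = (X * G) * (((1 - X) * Ad - Xd) * (X - (1 - T * X)))"
  by (simp add: algebra_simps)

lemma ring2b:
  fixes T X Ad Xd :: "'a::comm_ring_1"
  shows "(1 - X) * ((1 - X) * Ad * (X - (1 - T*X)) + (1 - T*X) * Xd - ((1 - T*X) * Ad) * X)
       - ((1 - X) * Ad - Xd) * (X - (1 - T*X)) = X * (X * (T * Xd + Ad * (X - 1)))"
  by (simp add: algebra_simps)

theorem lemma3p1:
  fixes d :: nat
  assumes "1 \<le> d"
  shows "GF3 d * (((1 - Tv * Xv) * (1 - Xv) ^ d - Yv ^ (d+1)) * (Xv + Yv - 1))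
           = Tv * Xv * Yv * (1 - Xv) ^ d * (Xv + Yv - 1)
             + Xv * Yv * (Yv ^ (d+1) - Yv * (1 - Xv) ^ d)
       \<and> GF2 d * ((1 - X2 - T2 * X2) * ((1 - T2 * X2) ^ d * (X2 - 1) + X2 ^ (d+1)))
           = X2 * (T2 * X2 ^ (d+1) + (1 - T2 * X2) ^ d * (X2 - 1))"
proof
  define P where "P = (\<lambda>p::nat. p mod (d+1) = 1 mod (d+1))"
  have per1: "P (k + (d+1)) = P k" for k unfolding P_def by (simp only: mod_add_self2)
  have P1: "P 1" by (simp add: P_def)
  have Pm: "\<not> P m" if "m \<in> {2..d+1}" for m
  proof -
    have "1 mod (d+1) = 1" using assms by simp
    moreover have "m mod (d+1) \<noteq> 1"
    proof (cases "m = d+1")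
      case True then show ?thesis using assms by simp
    next
      case False then have "m < d+1" using that by simp
      then show ?thesis using that by simp
    qed
    ultimately show ?thesis by (simp add: P_def)
  qed
  have GF3_eq: "GF3 d = F3 P" unfolding GF3_def F3_def PP_def modd_def P_def by simp
  have H: "F3 P * ((fps_const ((1 - fps_const fps_X * fps_X) * (1 - 1 * fps_X) ^ d) - fps_X ^ (d+1)) * (fps_X - fps_const (1 - 1 * fps_X)))
     = (1 - fps_X) * (fps_const ((1 - fps_const fps_X * fps_X) * (1 - 1 * fps_X) ^ d) * (fps_X - fps_const (1 - 1 * fps_X))
          + fps_const (1 - 1 * fps_X) * fps_X ^ (d+1)
          - fps_const ((1 - 1 * fps_X) * (1 - 1 * fps_X) ^ d) * fps_X)
       - (fps_const ((1 - fps_const fps_X * fps_X) * (1 - 1 * fps_X) ^ d) - fps_X ^ (d+1)) * (fps_X - fps_const (1 - 1 * fps_X))"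
    by (rule main_general[where M=P and u="fps_const fps_X" and v=1 and d=d, OF assms per1]) (use P1 Pm in \<open>auto simp: W_def\<close>)
  have e1: "fps_const (1 - 1 * fps_X) = (1 - Xv :: int fps fps fps)"
    by (simp add: Xv_def fc_sub1)
  have e2: "fps_const ((1 - fps_const fps_X * fps_X) * (1 - 1 * fps_X) ^ d) = (1 - Tv * Xv) * (1 - Xv :: int fps fps fps) ^ d"
    by (simp add: Tv_def Xv_def fc_sub1 flip: fps_const_mult fps_const_power)
  have e3: "fps_const ((1 - 1 * fps_X) * (1 - 1 * fps_X) ^ d) = (1 - Xv) * (1 - Xv :: int fps fps fps) ^ d"
    by (simp add: Xv_def fc_sub1 flip: fps_const_mult fps_const_power)
  have H': "GF3 d * (((1 - Tv * Xv) * (1 - Xv) ^ d - Yv ^ (d+1)) * (Yv - (1 - Xv)))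
     = (1 - Yv) * ((1 - Tv * Xv) * (1 - Xv) ^ d * (Yv - (1 - Xv)) + (1 - Xv) * Yv ^ (d+1)
          - ((1 - Xv) * (1 - Xv) ^ d) * Yv)
       - ((1 - Tv * Xv) * (1 - Xv) ^ d - Yv ^ (d+1)) * (Yv - (1 - Xv))"
    using H unfolding e1 e2 e3 GF3_eq Yv_def .
  show "GF3 d * (((1 - Tv * Xv) * (1 - Xv) ^ d - Yv ^ (d+1)) * (Xv + Yv - 1))
           = Tv * Xv * Yv * (1 - Xv) ^ d * (Xv + Yv - 1)
             + Xv * Yv * (Yv ^ (d+1) - Yv * (1 - Xv) ^ d)"
  proof -
    have e: "Xv + Yv - 1 = Yv - (1 - Xv)" by (simp add: algebra_simps)
    have "GF3 d * (((1 - Tv * Xv) * (1 - Xv) ^ d - Yv ^ (d+1)) * (Xv + Yv - 1))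
        = GF3 d * (((1 - Tv * Xv) * (1 - Xv) ^ d - Yv ^ (d+1)) * (Yv - (1 - Xv)))"
      by (simp only: e)
    also have "\<dots> = (1 - Yv) * ((1 - Tv * Xv) * (1 - Xv) ^ d * (Yv - (1 - Xv)) + (1 - Xv) * Yv ^ (d+1)
          - ((1 - Xv) * (1 - Xv) ^ d) * Yv)
       - ((1 - Tv * Xv) * (1 - Xv) ^ d - Yv ^ (d+1)) * (Yv - (1 - Xv))"
      by (rule H')
    also have "\<dots> = Tv * Xv * Yv * (1 - Xv) ^ d * (Xv + Yv - 1) + Xv * Yv * (Yv ^ (d+1) - Yv * (1 - Xv) ^ d)"
      by (rule ring1)
    finally show ?thesis .
  qed
next
  define M2 where "M2 = (\<lambda>p::nat. \<not> (p mod (d+1) = 1 mod (d+1)))"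
  have per2: "M2 (k + (d+1)) = M2 k" for k unfolding M2_def by (simp only: mod_add_self2)
  have M21: "\<not> M2 1" by (simp add: M2_def)
  have M2m: "M2 m" if "m \<in> {2..d+1}" for m
  proof -
    have "1 mod (d+1) = 1" using assms by simp
    moreover have "m mod (d+1) \<noteq> 1"
    proof (cases "m = d+1")
      case True then show ?thesis using assms by simp
    next
      case False then have "m < d+1" using that by simp
      then show ?thesis using that by simp
    qed
    ultimately show ?thesis by (simp add: M2_def)
  qed
  let ?a = "1 - fps_const fps_X * fps_X :: int fps fps"
  let ?b = "1 - 1 * fps_X :: int fps fps"
  have H: "F3 M2 * ((fps_const (?b * ?a ^ d) - fps_X ^ (d+1)) * (fps_X - fps_const ?a))
     = (1 - fps_X) * (fps_const (?b * ?a ^ d) * (fps_X - fps_const ?a) + fps_const ?a * fps_X ^ (d+1)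
          - fps_const (?a * ?a ^ d) * fps_X)
       - (fps_const (?b * ?a ^ d) - fps_X ^ (d+1)) * (fps_X - fps_const ?a)"
    by (rule main_general[where M=M2 and u=1 and v="fps_const fps_X" and d=d, OF assms per2]) (use M21 M2m in \<open>auto simp: W_def\<close>)
  then have "ev (F3 M2 * ((fps_const (?b * ?a ^ d) - fps_X ^ (d+1)) * (fps_X - fps_const ?a)))
     = ev ((1 - fps_X) * (fps_const (?b * ?a ^ d) * (fps_X - fps_const ?a) + fps_const ?a * fps_X ^ (d+1)
          - fps_const (?a * ?a ^ d) * fps_X)
       - (fps_const (?b * ?a ^ d) - fps_X ^ (d+1)) * (fps_X - fps_const ?a))" by simp
  then have H2: "(fps_X * GF2 d) * (((?b * ?a ^ d) - fps_X ^ (d+1)) * (fps_X - ?a))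
     = (1 - fps_X) * ((?b * ?a ^ d) * (fps_X - ?a) + ?a * fps_X ^ (d+1)
          - (?a * ?a ^ d) * fps_X)
       - ((?b * ?a ^ d) - fps_X ^ (d+1)) * (fps_X - ?a)"
    unfolding ev_mult ev_diff ev_add ev_const ev_X ev_power ev_1 ev_F3[of d, folded M2_def] .
  have "X2 * (GF2 d * ((1 - X2 - T2 * X2) * ((1 - T2 * X2) ^ d * (X2 - 1) + X2 ^ (d+1))))
      = X2 * (X2 * (T2 * X2 ^ (d+1) + (1 - T2 * X2) ^ d * (X2 - 1)))"
    unfolding ring2a ring2b[symmetric]
    using H2 by (simp add: X2_def T2_def)
  then show "GF2 d * ((1 - X2 - T2 * X2) * ((1 - T2 * X2) ^ d * (X2 - 1) + X2 ^ (d+1)))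
           = X2 * (T2 * X2 ^ (d+1) + (1 - T2 * X2) ^ d * (X2 - 1))"
    by (simp add: X2_def)
qed


end
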